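(* For $\theta>0$ let $U_1,U_2,\dots$ be i.i.d. $\mathrm{Beta}(1,\theta)$ random variables, and set $X_1=U_1$, $X_k=(1-U_1)\cdots(1-U_{k-1})U_k$ for $k\ge2$. Fix $n\ge1$ and let $\Pi^{\mathrm{gem}}_{n,\theta}$ be the law of $(X_1,\dots,X_n)$ on $\Delta_n=\{(x_1,\dots,x_n):x_k\ge0,\ \sum_{i=1}^n x_i\le1\}$. Then, as $\theta\to\infty$, $\{\Pi^{\mathrm{gem}}_{n,\theta}:\theta>0\}$ satisfies an LDP on $\Delta_n$ with speed $\theta$ and rate function $$S_n(\mathbf x)=\begin{cases}\log\dfrac1{1-\sum_{k=1}^n x_k},&\mathbf x\in\Delta_n,\ \sum_{k=1}^n x_k<1,\\ \infty,&\text{otherwise}.\end{cases}$$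
   Context: An LDP with speed $\theta$ uses normalization $\theta^{-1}\log$ as $\theta\to\infty$. *)

theory Defs
  imports "HOL-Probability.Probability"
begin

definition beta1 :: "real \<Rightarrow> real measure" where
  "beta1 \<theta> = density lborel
     (\<lambda>u. ennreal (indicator {0<..<1} u * \<theta> * (1 - u) powr (\<theta> - 1)))"

text \<open>Points of R^n are functions nat => real vanishing outside {0..<n}
  (coordinate k-1 of the paper is index k here); topology = product topology.\<close>
definition simplex_n :: "nat \<Rightarrow> (nat \<Rightarrow> real) set" where
  "simplex_n n = {x. (\<forall>k. 0 \<le> x k) \<and> (\<forall>k\<ge>n. x k = 0) \<and> (\<Sum>k<n. x k) \<le> 1}"

definition gem_map :: "nat \<Rightarrow> (nat \<Rightarrow> real) \<Rightarrow> (nat \<Rightarrow> real)" where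
  "gem_map n u = (\<lambda>k. if k < n then (\<Prod>i<k. 1 - u i) * u k else 0)"

definition gem_law :: "nat \<Rightarrow> real \<Rightarrow> (nat \<Rightarrow> real) measure" where
  "gem_law n \<theta> = distr (PiM {..<n} (\<lambda>_. beta1 \<theta>)) borel (gem_map n)"

definition gem_rate :: "nat \<Rightarrow> (nat \<Rightarrow> real) \<Rightarrow> ereal" where
  "gem_rate n x = (if x \<in> simplex_n n \<and> (\<Sum>k<n. x k) < 1
      then ereal (ln (1 / (1 - (\<Sum>k<n. x k)))) else \<infinity>)"

definition ldp_log :: "real \<Rightarrow> real \<Rightarrow> ereal" where
  "ldp_log \<theta> p = (if p = 0 then -\<infinity> else ereal (ln p / \<theta>))"

definition rate_function :: "'a topology \<Rightarrow> ('a \<Rightarrow> ereal) \<Rightarrow> bool" where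
  "rate_function X I \<longleftrightarrow> (\<forall>x\<in>topspace X. 0 \<le> I x) \<and>
     (\<forall>c::real. closedin X {x\<in>topspace X. I x \<le> ereal c})"

definition LDP :: "'a topology \<Rightarrow> (real \<Rightarrow> 'a measure) \<Rightarrow> ('a \<Rightarrow> ereal) \<Rightarrow> bool" where
  "LDP X P I \<longleftrightarrow> rate_function X I \<and>
     (\<forall>C. closedin X C \<longrightarrow>
        Limsup at_top (\<lambda>\<theta>. ldp_log \<theta> (measure (P \<theta>) C)) \<le> - (INF x\<in>C. I x)) \<and>
     (\<forall>G. openin X G \<longrightarrow>
        - (INF x\<in>G. I x) \<le> Liminf at_top (\<lambda>\<theta>. ldp_log \<theta> (measure (P \<theta>) G)))"

end

theory Submission
  imports Defs
begin

lemma beta1_space[simp]: "space (beta1 t) = UNIV"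
  by (simp add: beta1_def)
lemma beta1_sets[simp, measurable_cong]: "sets (beta1 t) = sets borel"
  by (simp add: beta1_def)

lemma beta1_dens_meas[measurable]:
  "(\<lambda>u. ennreal (indicator {0<..<1} u * t * (1 - u) powr (t - 1))) \<in> borel_measurable borel"
  by measurable

lemma beta1_finite:
  assumes "t \<ge> 1" shows "finite_measure (beta1 t)"
proof (rule finite_measureI)
  have "emeasure (beta1 t) (space (beta1 t)) = (\<integral>\<^sup>+u. ennreal (indicator {0<..<1} u * t * (1 - u) powr (t - 1)) \<partial>lborel)"
    unfolding beta1_def by (simp add: emeasure_density)
  also have "\<dots> \<le> (\<integral>\<^sup>+(u::real). ennreal (t * indicator {0<..<1} u) \<partial>lborel)"
  proof (rule nn_integral_mono)
    fix u :: real
    show "ennreal (indicator {0<..<1} u * t * (1 - u) powr (t - 1)) \<le> ennreal (t * indicator {0<..<1} u)"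
    proof (cases "u \<in> {0<..<1}")
      case True
      then have "(1 - u) powr (t - 1) \<le> 1" using assms by (intro powr_le1) auto
      then show ?thesis using True assms by (simp add: ennreal_leI)
    qed simp
  qed
  also have "\<dots> = ennreal t" proof -
    have "(\<integral>\<^sup>+(u::real). indicator {0<..<1} u \<partial>lborel) = 1"
      by (subst nn_integral_indicator) auto
    then show ?thesis using assms by (simp add: nn_integral_cmult ennreal_mult flip: ennreal_indicator)
  qed
  finally have "emeasure (beta1 t) (space (beta1 t)) < top"
    using ennreal_less_top[of t] by (rule order.strict_trans1)
  then show "emeasure (beta1 t) (space (beta1 t)) \<noteq> \<infinity>" by (simp add: infinity_ennreal_def)
qed

lemma gem_sum_aux: "(\<Sum>k<(m::nat). (\<Prod>i<k. 1 - u i) * u k) = 1 - (\<Prod>i<m. 1 - (u i::real))"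
  by (induction m) (auto simp: algebra_simps)

lemma gem_sum: "(\<Sum>k<n. gem_map n u k) = 1 - (\<Prod>i<n. 1 - u i)"
  unfolding gem_map_def using gem_sum_aux[where m=n and u=u] by simp

lemma prod_unit_interval: "(\<And>i. i \<in> A \<Longrightarrow> 0 \<le> (a i::real) \<and> a i \<le> 1) \<Longrightarrow> 0 \<le> prod a A \<and> prod a A \<le> 1"
  by (induction A rule: infinite_finite_induct) (auto intro: mult_le_one)

lemma gem_in_simplex:
  assumes "\<And>i. i < n \<Longrightarrow> 0 \<le> u i \<and> u i \<le> 1"
  shows "gem_map n u \<in> simplex_n n"
proof -
  have p: "0 \<le> (\<Prod>i<k. 1 - u i) \<and> (\<Prod>i<k. 1 - u i) \<le> 1" if "k \<le> n" for k
    using that assms by (intro prod_unit_interval) auto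
  show ?thesis unfolding simplex_n_def
  proof (intro CollectI conjI allI impI)
    fix k show "0 \<le> gem_map n u k" unfolding gem_map_def using p[of k] assms[of k] by auto
  next
    fix k assume "n \<le> k" then show "gem_map n u k = 0" unfolding gem_map_def by auto
  next
    show "(\<Sum>k<n. gem_map n u k) \<le> 1" unfolding gem_sum using p[of n] by auto
  qed
qed

lemma prod_diff_le:
  assumes "finite A" "\<And>i. i \<in> A \<Longrightarrow> \<bar>a i\<bar> \<le> (1::real) \<and> \<bar>b i\<bar> \<le> 1"
  shows "\<bar>prod a A - prod b A\<bar> \<le> (\<Sum>i\<in>A. \<bar>a i - b i\<bar>)"
  using assms
proof (induction A rule: finite_induct)
  case (insert x F)
  have pb0: "(\<Prod>i\<in>F. \<bar>b i\<bar>) \<le> 1"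
    by (rule prod_le_1) (use insert.prems in auto)
  have pb: "\<bar>prod b F\<bar> \<le> 1" using pb0 by (simp add: abs_prod)
  have ax: "\<bar>a x\<bar> \<le> 1" using insert.prems by auto
  have IH: "\<bar>prod a F - prod b F\<bar> \<le> (\<Sum>i\<in>F. \<bar>a i - b i\<bar>)"
    using insert.IH insert.prems by auto
  have "\<bar>a x * prod a F - b x * prod b F\<bar> = \<bar>a x * (prod a F - prod b F) + (a x - b x) * prod b F\<bar>"
    by (simp add: algebra_simps)
  also have "\<dots> \<le> \<bar>a x * (prod a F - prod b F)\<bar> + \<bar>(a x - b x) * prod b F\<bar>"
    by (rule abs_triangle_ineq)
  also have "\<dots> = \<bar>a x\<bar> * \<bar>prod a F - prod b F\<bar> + \<bar>a x - b x\<bar> * \<bar>prod b F\<bar>"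
    by (simp only: abs_mult)
  also have "\<dots> \<le> 1 * \<bar>prod a F - prod b F\<bar> + \<bar>a x - b x\<bar> * 1"
    by (intro add_mono mult_mono ax pb order.refl abs_ge_zero zero_le_one)
  also have "\<dots> \<le> (\<Sum>i\<in>F. \<bar>a i - b i\<bar>) + \<bar>a x - b x\<bar>"
    using IH by simp
  finally show ?case using insert.hyps by (simp add: add.commute)
qed simp

lemma gem_lip:
  assumes "\<And>i. i < n \<Longrightarrow> 0 \<le> u i \<and> u i \<le> 1 \<and> 0 \<le> v i \<and> v i \<le> 1" "k < n"
  shows "\<bar>gem_map n u k - gem_map n v k\<bar> \<le> (\<Sum>i<Suc k. \<bar>u i - v i\<bar>)"
proof -
  define f where "f = (\<lambda>i. if i < k then 1 - u i else u i)"
  define g where "g = (\<lambda>i. if i < k then 1 - v i else v i)"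
  have f1: "(\<Prod>i<k. f i) = (\<Prod>i<k. 1 - u i)" by (rule prod.cong) (simp_all add: f_def)
  have g1: "(\<Prod>i<k. g i) = (\<Prod>i<k. 1 - v i)" by (rule prod.cong) (simp_all add: g_def)
  have "gem_map n u k = (\<Prod>i<Suc k. f i)"
    using \<open>k < n\<close> unfolding prod.lessThan_Suc f1 by (simp add: gem_map_def f_def)
  moreover have "gem_map n v k = (\<Prod>i<Suc k. g i)"
    using \<open>k < n\<close> unfolding prod.lessThan_Suc g1 by (simp add: gem_map_def g_def)
  moreover have "\<bar>f i\<bar> \<le> 1 \<and> \<bar>g i\<bar> \<le> 1" if "i \<in> {..<Suc k}" for i
  proof -
    have "i < n" using that \<open>k < n\<close> by simp
    then show ?thesis using assms(1)[of i] unfolding f_def g_def by auto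
  qed
  ultimately have "\<bar>gem_map n u k - gem_map n v k\<bar> \<le> (\<Sum>i<Suc k. \<bar>f i - g i\<bar>)"
    using prod_diff_le[of "{..<Suc k}" f g] by (simp only: finite_lessThan)
  also have "\<dots> = (\<Sum>i<Suc k. \<bar>u i - v i\<bar>)"
    by (rule sum.cong) (auto simp: f_def g_def)
  finally show ?thesis .
qed

lemma gem_meas: "gem_map n \<in> borel_measurable (PiM {..<n} (\<lambda>_. beta1 t))"
proof (rule measurable_coordinatewise_then_product)
  fix k
  show "(\<lambda>x. gem_map n x k) \<in> borel_measurable (PiM {..<n} (\<lambda>_. beta1 t))"
  proof (cases "k < n")
    case True
    have c: "(\<lambda>x. x i) \<in> borel_measurable (PiM {..<n} (\<lambda>_. beta1 t))" if "i < n" for i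
    proof -
      have "(\<lambda>x. x i) \<in> PiM {..<n} (\<lambda>_. beta1 t) \<rightarrow>\<^sub>M beta1 t"
        using that by (intro measurable_component_singleton) simp
      then show ?thesis by (simp only: measurable_cong_sets[OF refl beta1_sets[of t]])
    qed
    have "(\<lambda>x. (\<Prod>i<k. 1 - x i) * x k) \<in> borel_measurable (PiM {..<n} (\<lambda>_. beta1 t))"
    proof (rule borel_measurable_times)
      show "(\<lambda>x. \<Prod>i<k. 1 - x i) \<in> borel_measurable (PiM {..<n} (\<lambda>_. beta1 t))"
      proof (rule borel_measurable_prod)
        fix i assume "i \<in> {..<k}"
        then have "i < n" using True by simp
        from c[OF this] show "(\<lambda>x. 1 - x i) \<in> borel_measurable (PiM {..<n} (\<lambda>_. beta1 t))"
          by (rule borel_measurable_diff[OF borel_measurable_const])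
      qed
      show "(\<lambda>x. x k) \<in> borel_measurable (PiM {..<n} (\<lambda>_. beta1 t))" using c True by simp
    qed
    then show ?thesis using True unfolding gem_map_def by simp
  qed (simp add: gem_map_def)
qed


lemma closed_simplex: "closed (simplex_n n)"
proof -
  have "simplex_n n = (\<Inter>k. {x. 0 \<le> x k}) \<inter> (\<Inter>k\<in>{n..}. {x. x k = 0}) \<inter> {x. (\<Sum>k<n. x k) \<le> 1}"
    unfolding simplex_n_def by auto
  moreover have "closed {x::nat\<Rightarrow>real. 0 \<le> x k}" for k
    by (intro closed_Collect_le continuous_on_const continuous_on_product_coordinates)
  moreover have "closed {x::nat\<Rightarrow>real. x k = 0}" for k
    by (intro closed_Collect_eq continuous_on_const continuous_on_product_coordinates)
  moreover have "closed {x::nat\<Rightarrow>real. (\<Sum>k<n. x k) \<le> 1}"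
    by (intro closed_Collect_le continuous_on_const continuous_on_sum continuous_on_product_coordinates)
  ultimately show ?thesis by (simp only:) (intro closed_Int closed_INT; simp)
qed

lemma open_fun_eps:
  fixes T :: "(nat \<Rightarrow> real) set"
  assumes "open T" "x \<in> T"
  shows "\<exists>e>0. \<forall>z. (\<forall>k. z k \<noteq> x k \<longrightarrow> k < n) \<and> (\<forall>k<n. \<bar>z k - x k\<bar> < e) \<longrightarrow> z \<in> T"
proof -
  have "openin (product_topology (\<lambda>i. euclidean) UNIV) T" using assms(1) by (simp add: open_fun_def)
  then obtain U where U: "finite {i. U i \<noteq> UNIV}" "\<And>i. open (U i)" "x \<in> Pi\<^sub>E UNIV U" "Pi\<^sub>E UNIV U \<subseteq> T"
    using assms(2) unfolding openin_product_topology_alt by auto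
  have "\<forall>i. \<exists>e. e > 0 \<and> ball (x i) e \<subseteq> U i"
  proof
    fix i
    have "x i \<in> U i" using U(3) by auto
    then show "\<exists>e. e > 0 \<and> ball (x i) e \<subseteq> U i" using U(2)[of i] open_contains_ball by auto
  qed
  from choice[OF this] obtain e where e0: "\<forall>i. e i > 0 \<and> ball (x i) (e i) \<subseteq> U i" ..
  then have e: "\<And>i. e i > 0" "\<And>i. ball (x i) (e i) \<subseteq> U i" by auto
  define F where "F = {i. U i \<noteq> UNIV}"
  define \<epsilon> where "\<epsilon> = Min (insert 1 (e ` F))"
  have fin: "finite (insert 1 (e ` F))" using U(1) F_def by simp
  have "\<epsilon> > 0" unfolding \<epsilon>_def using fin e(1) by (subst Min_gr_iff) auto
  moreover have "z \<in> T" if z: "\<forall>k. z k \<noteq> x k \<longrightarrow> k < n" "\<forall>k<n. \<bar>z k - x k\<bar> < \<epsilon>" for z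
  proof -
    have "z i \<in> U i" for i
    proof (cases "i \<in> F")
      case True
      show ?thesis
      proof (cases "z i = x i")
        case True then show ?thesis using U(3) by auto
      next
        case False
        then have "\<bar>z i - x i\<bar> < \<epsilon>" using z by auto
        moreover have "\<epsilon> \<le> e i" unfolding \<epsilon>_def using fin \<open>i \<in> F\<close> by (intro Min_le) auto
        ultimately have "z i \<in> ball (x i) (e i)" by (simp add: dist_real_def abs_minus_commute)
        then show ?thesis using e(2)[of i] by (auto simp: mem_ball)
      qed
    qed (simp add: F_def)
    then have "z \<in> Pi\<^sub>E UNIV U" by auto
    then show ?thesis using U(4) by auto
  qed
  ultimately show ?thesis by blast
qed

lemma gem_rate_le_iff:
  assumes "x \<in> simplex_n n"
  shows "gem_rate n x \<le> ereal c \<longleftrightarrow> (\<Sum>k<n. x k) \<le> 1 - exp (-c)"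
proof -
  let ?s = "\<Sum>k<n. x k"
  have s1: "?s \<le> 1" using assms by (simp add: simplex_n_def)
  show ?thesis
  proof (cases "?s < 1")
    case True
    have "gem_rate n x \<le> ereal c \<longleftrightarrow> ln (1 / (1 - ?s)) \<le> c"
      using assms True by (simp add: gem_rate_def)
    also have "\<dots> \<longleftrightarrow> - ln (1 - ?s) \<le> c" using True by (simp add: ln_div)
    also have "\<dots> \<longleftrightarrow> exp (-c) \<le> 1 - ?s"
      using True ln_ge_iff[of "1 - ?s" "-c"] by linarith
    finally show ?thesis by linarith
  next
    case False
    then have "gem_rate n x = \<infinity>" by (simp add: gem_rate_def)
    moreover have "\<not> ?s \<le> 1 - exp (-c)" using False s1 exp_gt_zero[of "-c"] by linarith
    ultimately show ?thesis by simp
  qed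
qed

lemma gem_rate_nonneg:
  assumes "x \<in> simplex_n n" shows "0 \<le> gem_rate n x"
proof -
  have "x k \<ge> 0" for k using assms by (simp add: simplex_n_def)
  then have "(\<Sum>k<n. x k) \<ge> 0" by (simp add: sum_nonneg)
  then show ?thesis unfolding gem_rate_def by auto
qed

lemma rate_fn: "rate_function (subtopology euclidean (simplex_n n)) (gem_rate n)"
  unfolding rate_function_def
proof (intro conjI allI ballI)
  fix x assume "x \<in> topspace (subtopology euclidean (simplex_n n))"
  then show "0 \<le> gem_rate n x" by (simp add: gem_rate_nonneg)
next
  fix c :: real
  have "{x \<in> topspace (subtopology euclidean (simplex_n n)). gem_rate n x \<le> ereal c}
      = simplex_n n \<inter> {x. (\<Sum>k<n. x k) \<le> 1 - exp (-c)}"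
    using gem_rate_le_iff by auto
  moreover have "closed {x::nat\<Rightarrow>real. (\<Sum>k<n. x k) \<le> 1 - exp (-c)}"
    by (intro closed_Collect_le continuous_on_const continuous_on_sum continuous_on_product_coordinates)
  ultimately show "closedin (subtopology euclidean (simplex_n n)) {x \<in> topspace (subtopology euclidean (simplex_n n)). gem_rate n x \<le> ereal c}"
    by (simp add: closedin_closed_Int)
qed


lemma psf: "1 \<le> t \<Longrightarrow> product_sigma_finite (\<lambda>_::nat. beta1 t)"
  unfolding product_sigma_finite_def using beta1_finite finite_measure_def by auto

lemma PM_finite:
  assumes "1 \<le> t" shows "finite_measure (PiM {..<n} (\<lambda>_::nat. beta1 t))"
proof (rule finite_measureI)
  interpret P: product_sigma_finite "\<lambda>_::nat. beta1 t" using psf[OF assms] .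
  interpret B: finite_measure "beta1 t" using beta1_finite[OF assms] .
  have "emeasure (PiM {..<n} (\<lambda>_::nat. beta1 t)) (space (PiM {..<n} (\<lambda>_::nat. beta1 t)))
      = (\<Prod>i<n. emeasure (beta1 t) UNIV)"
    unfolding space_PiM by (subst P.emeasure_PiM) auto
  also have "\<dots> \<noteq> top"
    using B.emeasure_finite[of UNIV] by (simp add: ennreal_prod_eq_top power_eq_top_ennreal)
  finally show "emeasure (PiM {..<n} (\<lambda>_::nat. beta1 t)) (space (PiM {..<n} (\<lambda>_::nat. beta1 t))) \<noteq> \<infinity>"
    by (simp add: infinity_ennreal_def)
qed

definition hh :: "real \<Rightarrow> real \<Rightarrow> ennreal" where
  "hh t v = (if v \<in> {0<..<1} then ennreal ((1 - v) powr (1 - t)) else top)"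

lemma hh_meas[measurable]: "hh t \<in> borel_measurable borel"
  unfolding hh_def by measurable

lemma hh_int:
  assumes "1 \<le> t" shows "(\<integral>\<^sup>+v. hh t v \<partial>beta1 t) = ennreal t"
proof -
  have "(\<integral>\<^sup>+v. hh t v \<partial>beta1 t) =
      (\<integral>\<^sup>+v. ennreal (indicator {0<..<1} v * t * (1 - v) powr (t - 1)) * hh t v \<partial>lborel)"
    unfolding beta1_def by (subst nn_integral_density) (auto simp: measurable_lborel1)
  also have "\<dots> = (\<integral>\<^sup>+(v::real). ennreal (t * indicator {0<..<1} v) \<partial>lborel)"
  proof (rule nn_integral_cong)
    fix v :: real
    show "ennreal (indicator {0<..<1} v * t * (1 - v) powr (t - 1)) * hh t v = ennreal (t * indicator {0<..<1} v)"
    proof (cases "v \<in> {0<..<1}")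
      case True
      then have "(1 - v) powr (t - 1) * (1 - v) powr (1 - t) = 1"
        by (simp add: powr_add[symmetric])
      then show ?thesis using True assms
        by (simp add: hh_def ennreal_mult''[symmetric] mult.assoc)
    qed (simp add: hh_def)
  qed
  also have "\<dots> = ennreal t"
  proof -
    have "(\<integral>\<^sup>+(u::real). indicator {0<..<1} u \<partial>lborel) = 1"
      by (subst nn_integral_indicator) auto
    then show ?thesis using assms by (simp add: nn_integral_cmult ennreal_mult flip: ennreal_indicator)
  qed
  finally show ?thesis .
qed

lemma upper_meas:
  assumes t: "1 < t" and q: "0 < q" and C: "C \<in> sets borel"
    and Cq: "\<And>x. x \<in> C \<Longrightarrow> 1 - (\<Sum>k<n. x k) \<le> q"
  shows "measure (gem_law n t) C \<le> t ^ n * q powr (t - 1)"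
proof -
  let ?M = "PiM {..<n} (\<lambda>_::nat. beta1 t)"
  interpret P: product_sigma_finite "\<lambda>_::nat. beta1 t" using psf t by simp
  interpret F: finite_measure ?M using PM_finite t by simp
  define A where "A = gem_map n -` C \<inter> space ?M"
  have A: "A \<in> sets ?M" unfolding A_def using gem_meas C by (rule measurable_sets)
  have mC: "measure (gem_law n t) C = measure ?M A"
    unfolding gem_law_def A_def using gem_meas C by (rule measure_distr)
  have pw: "indicator A u \<le> ennreal (q powr (t - 1)) * (\<Prod>i<n. hh t (u i))" if u: "u \<in> space ?M" for u
  proof (cases "u \<in> A")
    case False then show ?thesis by simp
  next
    case True
    then have "1 - (\<Sum>k<n. gem_map n u k) \<le> q" using Cq unfolding A_def by auto
    then have Pq: "(\<Prod>i<n. 1 - u i) \<le> q" by (simp add: gem_sum)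
    show ?thesis
    proof (cases "\<forall>i<n. u i \<in> {0<..<1}")
      case True
      define P where "P = (\<Prod>i<n. 1 - u i)"
      have P0: "0 < P" unfolding P_def using True by (intro prod_pos) auto
      have "(\<Prod>i<n. hh t (u i)) = (\<Prod>i<n. ennreal ((1 - u i) powr (1 - t)))"
        using True by (intro prod.cong) (auto simp: hh_def)
      also have "\<dots> = ennreal (\<Prod>i<n. (1 - u i) powr (1 - t))" by (simp add: prod_ennreal)
      also have "\<dots> = ennreal (P powr (1 - t))" unfolding P_def by (simp add: prod_powr_distrib)
      finally have e1: "(\<Prod>i<n. hh t (u i)) = ennreal (P powr (1 - t))" .
      have "P powr (t - 1) \<le> q powr (t - 1)" using P0 Pq t unfolding P_def by (intro powr_mono2) auto
      moreover have "P powr (1 - t) = 1 / P powr (t - 1)" using P0 by (simp add: powr_minus_divide[symmetric])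
      ultimately have "P powr (1 - t) * P powr (t - 1) \<le> P powr (1 - t) * q powr (t - 1)"
        and eq1: "P powr (1 - t) * P powr (t - 1) = 1"
        using P0 by (auto intro!: mult_left_mono)
      then have "1 \<le> q powr (t - 1) * P powr (1 - t)" by (simp add: mult.commute)
      then have "ennreal 1 \<le> ennreal (q powr (t - 1) * P powr (1 - t))" by (rule ennreal_leI)
      then show ?thesis using True \<open>u \<in> A\<close> e1 by (simp add: ennreal_mult'')
    next
      case False
      then obtain j where j: "j < n" "u j \<notin> {0<..<1}" by auto
      have "(\<Prod>i<n. hh t (u i)) = top"
        unfolding ennreal_prod_eq_top using j by (auto simp: hh_def)
      moreover have "ennreal (q powr (t - 1)) \<noteq> 0" using q by simp
      ultimately show ?thesis by (simp add: ennreal_mult_top)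
    qed
  qed
  have "emeasure ?M A = (\<integral>\<^sup>+u. indicator A u \<partial>?M)" using A by simp
  also have "\<dots> \<le> (\<integral>\<^sup>+u. ennreal (q powr (t - 1)) * (\<Prod>i<n. hh t (u i)) \<partial>?M)"
    by (rule nn_integral_mono) (rule pw)
  also have "\<dots> = ennreal (q powr (t - 1)) * (\<integral>\<^sup>+u. (\<Prod>i<n. hh t (u i)) \<partial>?M)"
    by (rule nn_integral_cmult) measurable
  also have "(\<integral>\<^sup>+u. (\<Prod>i<n. hh t (u i)) \<partial>?M) = (\<Prod>i<n. \<integral>\<^sup>+v. hh t v \<partial>beta1 t)"
    by (rule P.product_nn_integral_prod) auto
  also have "\<dots> = ennreal (t ^ n)" using t by (simp add: hh_int ennreal_power)
  finally have "emeasure ?M A \<le> ennreal (q powr (t - 1) * t ^ n)" using t by (simp add: ennreal_mult'')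
  then have "measure ?M A \<le> q powr (t - 1) * t ^ n"
    using t by (simp add: F.emeasure_eq_measure)
  then show ?thesis using mC by (simp add: mult.commute)
qed


lemma beta1_Ioc:
  assumes t: "1 \<le> t" and ab: "0 \<le> a" "a < b" "b < 1"
  shows "t * (1 - b) powr (t - 1) * (b - a) \<le> measure (beta1 t) {a<..b}"
proof -
  interpret B: finite_measure "beta1 t" using beta1_finite[OF t] .
  define K where "K = t * (1 - b) powr (t - 1)"
  have K0: "0 \<le> K" unfolding K_def using t by simp
  have "emeasure (beta1 t) {a<..b} =
      (\<integral>\<^sup>+u. ennreal (indicator {0<..<1} u * t * (1 - u) powr (t - 1)) * indicator {a<..b} u \<partial>lborel)"
    unfolding beta1_def by (subst emeasure_density) auto
  also have "\<dots> \<ge> (\<integral>\<^sup>+(u::real). ennreal (K * indicator {a<..b} u) \<partial>lborel)"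
  proof (rule nn_integral_mono)
    fix u :: real
    show "ennreal (K * indicator {a<..b} u) \<le> ennreal (indicator {0<..<1} u * t * (1 - u) powr (t - 1)) * indicator {a<..b} u"
    proof (cases "u \<in> {a<..b}")
      case True
      then have u: "0 < u" "u < 1" "u \<le> b" using ab by auto
      have "(1 - b) powr (t - 1) \<le> (1 - u) powr (t - 1)" using u t ab by (intro powr_mono2) auto
      then have "K \<le> indicator {0<..<1} u * t * (1 - u) powr (t - 1)"
        unfolding K_def using u t by simp
      then show ?thesis using True by (simp add: ennreal_leI)
    qed simp
  qed
  also have "(\<integral>\<^sup>+(u::real). ennreal (K * indicator {a<..b} u) \<partial>lborel) = ennreal (K * (b - a))"
  proof -
    have "(\<integral>\<^sup>+(u::real). indicator {a<..b} u \<partial>lborel) = ennreal (b - a)"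
      using ab by (subst nn_integral_indicator) auto
    then show ?thesis using K0 ab by (simp add: nn_integral_cmult ennreal_mult flip: ennreal_indicator)
  qed
  finally have "ennreal (K * (b - a)) \<le> ennreal (measure (beta1 t) {a<..b})"
    by (simp add: B.emeasure_eq_measure)
  then show ?thesis unfolding K_def by (simp add: ennreal_le_iff)
qed

definition ust :: "(nat \<Rightarrow> real) \<Rightarrow> nat \<Rightarrow> real" where
  "ust x k = x k / (1 - (\<Sum>i<k. x i))"

lemma ust_facts:
  assumes x: "x \<in> simplex_n n" and s: "(\<Sum>k<n. x k) < 1"
  shows "\<And>k. k \<le> n \<Longrightarrow> 1 - (\<Sum>k<n. x k) \<le> 1 - (\<Sum>i<k. x i) \<and> 1 - (\<Sum>i<k. x i) \<le> 1"
    and "\<And>k. k \<le> n \<Longrightarrow> (\<Prod>i<k. 1 - ust x i) = 1 - (\<Sum>i<k. x i)"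
    and "\<And>k. k < n \<Longrightarrow> gem_map n (ust x) k = x k"
    and "\<And>k. k < n \<Longrightarrow> 0 \<le> ust x k \<and> 1 - (\<Sum>k<n. x k) \<le> 1 - ust x k"
proof -
  have x0: "\<And>k. 0 \<le> x k" using x by (simp add: simplex_n_def)
  show D: "1 - (\<Sum>k<n. x k) \<le> 1 - (\<Sum>i<k. x i) \<and> 1 - (\<Sum>i<k. x i) \<le> 1" if "k \<le> n" for k
  proof -
    have "(\<Sum>i<k. x i) \<le> (\<Sum>i<n. x i)" using that x0 by (intro sum_mono2) auto
    moreover have "0 \<le> (\<Sum>i<k. x i)" using x0 by (simp add: sum_nonneg)
    ultimately show ?thesis by linarith
  qed
  show P: "(\<Prod>i<k. 1 - ust x i) = 1 - (\<Sum>i<k. x i)" if "k \<le> n" for k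
    using that
  proof (induction k)
    case (Suc k)
    have pos: "1 - (\<Sum>i<k. x i) > 0" using D[of k] Suc.prems s by linarith
    have "(\<Prod>i<Suc k. 1 - ust x i) = (1 - (\<Sum>i<k. x i)) * (1 - x k / (1 - (\<Sum>i<k. x i)))"
      using Suc by (simp add: ust_def)
    also have "\<dots> = 1 - (\<Sum>i<Suc k. x i)" using pos by (simp add: field_simps)
    finally show ?case .
  qed simp
  show "gem_map n (ust x) k = x k" if "k < n" for k
  proof -
    have pos: "1 - (\<Sum>i<k. x i) > 0" using D[of k] that s by linarith
    show ?thesis using that P[of k] pos by (simp add: gem_map_def ust_def)
  qed
  show "0 \<le> ust x k \<and> 1 - (\<Sum>k<n. x k) \<le> 1 - ust x k" if "k < n" for k
  proof -
    have pos: "1 - (\<Sum>i<k. x i) > 0" using D[of k] that s by linarith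
    have le1: "1 - (\<Sum>i<k. x i) \<le> 1" using D[of k] that by simp
    have D1: "1 - (\<Sum>k<n. x k) \<le> 1 - (\<Sum>i<Suc k. x i)" using D[of "Suc k"] that by simp
    have "1 - ust x k = (1 - (\<Sum>i<Suc k. x i)) / (1 - (\<Sum>i<k. x i))"
      using pos by (simp add: ust_def field_simps)
    also have "\<dots> \<ge> 1 - (\<Sum>i<Suc k. x i)"
    proof -
      have a0: "0 \<le> 1 - (\<Sum>i<Suc k. x i)" using D1 s by linarith
      have "(1 - (\<Sum>i<Suc k. x i)) * (1 - (\<Sum>i<k. x i)) \<le> 1 - (\<Sum>i<Suc k. x i)"
        by (rule mult_left_le[OF le1 a0])
      then show ?thesis using pos by (simp add: le_divide_eq)
    qed
    finally show ?thesis using x0[of k] pos D1 by (auto simp: ust_def)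
  qed
qed

lemma lower_meas:
  assumes n: "n \<ge> 1" and T: "open T" "x \<in> T" and x: "x \<in> simplex_n n" and sx: "(\<Sum>k<n. x k) < 1"
    and c: "0 < c" "c < 1 - (\<Sum>k<n. x k)"
  shows "eventually (\<lambda>t. c powr t \<le> measure (gem_law n t) (simplex_n n \<inter> T)) at_top"
proof -
  define s where "s = (\<Sum>k<n. x k)"
  obtain \<epsilon> where \<epsilon>: "\<epsilon> > 0" "\<And>z. (\<forall>k. z k \<noteq> x k \<longrightarrow> k < n) \<and> (\<forall>k<n. \<bar>z k - x k\<bar> < \<epsilon>) \<Longrightarrow> z \<in> T"
    using open_fun_eps[OF T, of n] by blast
  have U2: "(\<Prod>i<n. 1 - ust x i) = 1 - s" using ust_facts(2)[OF x sx, of n] s_def by simp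
  have U3: "\<And>k. k < n \<Longrightarrow> gem_map n (ust x) k = x k" using ust_facts(3)[OF x sx] .
  have U4: "\<And>k. k < n \<Longrightarrow> 0 \<le> ust x k \<and> 1 - s \<le> 1 - ust x k" using ust_facts(4)[OF x sx] s_def by simp
  have x0: "\<And>k. n \<le> k \<Longrightarrow> x k = 0" using x by (simp add: simplex_n_def)
  have s1: "1 - s > 0" using sx s_def by simp
  have cs: "c < 1 - s" using c s_def by simp
  have cq: "0 < c / (1 - s)" "c / (1 - s) < 1" using c(1) cs s1 by auto
  define \<eta> where "\<eta> = (1 - c / (1 - s)) / n"
  have nr: "real n \<ge> 1" using n by simp
  have \<eta>: "0 < \<eta>" "\<eta> < 1" "n * \<eta> = 1 - c / (1 - s)"
  proof -
    show "0 < \<eta>" unfolding \<eta>_def using cq nr by simp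
    have "\<eta> \<le> 1 - c / (1 - s)" unfolding \<eta>_def using cq nr by (simp add: divide_le_eq)
    then show "\<eta> < 1" using cq by simp
    show "n * \<eta> = 1 - c / (1 - s)" unfolding \<eta>_def using nr by simp
  qed
  define \<delta> where "\<delta> = min (\<eta> * (1 - s)) (\<epsilon> / (2 * n))"
  have \<delta>: "\<delta> > 0" "\<delta> \<le> \<eta> * (1 - s)" "n * \<delta> < \<epsilon>"
  proof -
    show "\<delta> > 0" unfolding \<delta>_def using \<eta> s1 \<epsilon> nr by simp
    show "\<delta> \<le> \<eta> * (1 - s)" unfolding \<delta>_def by simp
    have "\<delta> \<le> \<epsilon> / (2 * n)" unfolding \<delta>_def by simp
    then have "n * \<delta> \<le> n * (\<epsilon> / (2 * n))" using nr by (intro mult_left_mono) auto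
    also have "\<dots> = \<epsilon> / 2" using nr by simp
    finally show "n * \<delta> < \<epsilon>" using \<epsilon> by simp
  qed
  define b where "b k = ust x k + \<delta>" for k
  have bk: "0 \<le> ust x k \<and> ust x k < b k \<and> (1 - ust x k) * (1 - \<eta>) \<le> 1 - b k \<and> 0 < 1 - b k \<and> 1 - b k \<le> 1"
    if k: "k < n" for k
  proof -
    have u: "0 \<le> ust x k" "1 - s \<le> 1 - ust x k" using U4[OF k] by auto
    have "\<eta> * (1 - s) \<le> \<eta> * (1 - ust x k)" using u \<eta> by (intro mult_left_mono) auto
    then have "(1 - ust x k) * (1 - \<eta>) \<le> 1 - b k" using \<delta> unfolding b_def by (simp add: algebra_simps)
    moreover have "0 < (1 - ust x k) * (1 - \<eta>)" using u s1 \<eta> by (intro mult_pos_pos) auto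
    ultimately show ?thesis using u \<delta> unfolding b_def by auto
  qed
  have prodb: "c \<le> (\<Prod>k<n. 1 - b k)"
  proof -
    have "(\<Prod>k<n. (1 - ust x k) * (1 - \<eta>)) \<le> (\<Prod>k<n. 1 - b k)"
    proof (rule prod_mono)
      fix k assume "k \<in> {..<n}"
      then have k: "k < n" by simp
      have "0 \<le> 1 - ust x k" using U4[OF k] s1 by linarith
      moreover have "0 \<le> 1 - \<eta>" using \<eta> by simp
      ultimately show "0 \<le> (1 - ust x k) * (1 - \<eta>) \<and> (1 - ust x k) * (1 - \<eta>) \<le> 1 - b k"
        using bk[OF k] by simp
    qed
    moreover have "(\<Prod>k<n. (1 - ust x k) * (1 - \<eta>)) = (1 - s) * (1 - \<eta>) ^ n"
      using U2 by (simp add: prod.distrib)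
    moreover have "1 - n * \<eta> \<le> (1 - \<eta>) ^ n"
      using Bernoulli_inequality[of "-\<eta>" n] \<eta> by simp
    moreover have "(1 - s) * (1 - n * \<eta>) = c" using \<eta>(3) s1 by simp
    ultimately show ?thesis using s1 mult_left_mono[of "1 - n * \<eta>" "(1 - \<eta>) ^ n" "1 - s"]
      by linarith
  qed
  define B where "B = Pi\<^sub>E {..<n} (\<lambda>k. {ust x k<..b k})"
  have Bsub: "B \<subseteq> gem_map n -` (simplex_n n \<inter> T) \<inter> space (PiM {..<n} (\<lambda>_::nat. beta1 t))" for t
  proof
    fix u assume uB: "u \<in> B"
    have ui: "ust x i < u i \<and> u i \<le> b i" if "i < n" for i
    proof -
      have "u i \<in> {ust x i<..b i}" using PiE_mem[OF uB[unfolded B_def]] that by simp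
      then show ?thesis by simp
    qed
    have u01: "0 \<le> u i \<and> u i \<le> 1" if "i < n" for i using ui[OF that] bk[OF that] by auto
    have "u \<in> space (PiM {..<n} (\<lambda>_::nat. beta1 t))"
      using uB unfolding B_def space_PiM beta1_space by (simp add: PiE_iff)
    moreover have "gem_map n u \<in> simplex_n n" using u01 by (intro gem_in_simplex) auto
    moreover have "gem_map n u \<in> T"
    proof (rule \<epsilon>(2), intro conjI allI impI)
      fix k assume "gem_map n u k \<noteq> x k"
      show "k < n"
      proof (rule ccontr)
        assume "\<not> k < n"
        then have "gem_map n u k = 0" "x k = 0" by (simp_all add: gem_map_def x0)
        then show False using \<open>gem_map n u k \<noteq> x k\<close> by simp
      qed
    next
      fix k assume k: "k < n"
      have "\<bar>gem_map n u k - gem_map n (ust x) k\<bar> \<le> (\<Sum>i<Suc k. \<bar>u i - ust x i\<bar>)"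
      proof (rule gem_lip)
        fix i assume i: "i < n"
        have "ust x i < 1" using bk[OF i] by linarith
        then show "0 \<le> u i \<and> u i \<le> 1 \<and> 0 \<le> ust x i \<and> ust x i \<le> 1"
          using u01[OF i] bk[OF i] by linarith
      qed (rule k)
      also have "\<dots> \<le> of_nat (card {..<Suc k}) * \<delta>"
      proof (rule sum_bounded_above)
        fix i assume "i \<in> {..<Suc k}"
        then have "i < n" using k by simp
        then show "\<bar>u i - ust x i\<bar> \<le> \<delta>" using ui[of i] unfolding b_def by auto
      qed
      also have "\<dots> \<le> n * \<delta>" using k \<delta> by (intro mult_right_mono) auto
      finally show "\<bar>gem_map n u k - x k\<bar> < \<epsilon>" using U3[OF k] \<delta> by simp
    qed
    ultimately show "u \<in> gem_map n -` (simplex_n n \<inter> T) \<inter> space (PiM {..<n} (\<lambda>_::nat. beta1 t))" by auto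
  qed
  have ST: "simplex_n n \<inter> T \<in> sets borel"
    using closed_simplex T(1) by (intro sets.Int borel_closed borel_open) auto
  show ?thesis
    using eventually_ge_at_top[of "max 1 (1 / \<delta>)"]
  proof eventually_elim
    case (elim t)
    then have t1: "1 \<le> t" and td: "1 \<le> t * \<delta>" using \<delta> by (auto simp: field_simps)
    let ?M = "PiM {..<n} (\<lambda>_::nat. beta1 t)"
    interpret P: product_sigma_finite "\<lambda>_::nat. beta1 t" using psf t1 by simp
    interpret F: finite_measure ?M using PM_finite t1 by simp
    have pre: "gem_map n -` (simplex_n n \<inter> T) \<inter> space ?M \<in> sets ?M"
      using gem_meas ST by (rule measurable_sets)
    have "measure ?M B = (\<Prod>k<n. measure (beta1 t) {ust x k<..b k})"
    proof -
      interpret Bf: finite_measure "beta1 t" using beta1_finite[OF t1] .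
      have "emeasure ?M B = (\<Prod>k<n. emeasure (beta1 t) {ust x k<..b k})"
        unfolding B_def by (subst P.emeasure_PiM) auto
      also have "\<dots> = ennreal (\<Prod>k<n. measure (beta1 t) {ust x k<..b k})"
        by (simp add: Bf.emeasure_eq_measure prod_ennreal)
      finally show ?thesis by (simp add: F.emeasure_eq_measure prod_nonneg)
    qed
    also have "\<dots> \<ge> (\<Prod>k<n. (1 - b k) powr t)"
    proof (rule prod_mono, rule conjI)
      fix k assume "k \<in> {..<n}"
      then have k: "k < n" by simp
      note bb = bk[OF k]
      show "0 \<le> (1 - b k) powr t" by simp
      have "(1 - b k) powr t \<le> (1 - b k) powr (t - 1)" using bb by (intro powr_mono') auto
      also have "\<dots> \<le> (t * \<delta>) * (1 - b k) powr (t - 1)" using td by (simp add: mult_le_cancel_right1)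
      also have "\<dots> = t * (1 - b k) powr (t - 1) * (b k - ust x k)" unfolding b_def by simp
      also have "\<dots> \<le> measure (beta1 t) {ust x k<..b k}"
        using bb t1 by (intro beta1_Ioc) auto
      finally show "(1 - b k) powr t \<le> measure (beta1 t) {ust x k<..b k}" .
    qed
    also have "(\<Prod>k<n. (1 - b k) powr t) = (\<Prod>k<n. 1 - b k) powr t"
      by (simp add: prod_powr_distrib)
    also have "\<dots> \<ge> c powr t" using prodb c t1 by (intro powr_mono2) auto
    also have "measure ?M B \<le> measure ?M (gem_map n -` (simplex_n n \<inter> T) \<inter> space ?M)"
      using Bsub pre by (intro F.finite_measure_mono) auto
    also have "\<dots> = measure (gem_law n t) (simplex_n n \<inter> T)"
      unfolding gem_law_def using gem_meas ST by (rule measure_distr[symmetric])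
    finally show ?case .
  qed
qed


lemma lim_aux: "((\<lambda>t. (real n * ln t - (t - 1) * M) / t) \<longlongrightarrow> - M) at_top"
proof -
  have "((\<lambda>t::real. real n * (ln t / t) - M + M * inverse t) \<longlongrightarrow> real n * 0 - M + M * 0) at_top"
    by (intro tendsto_intros ln_x_over_x_tendsto_0 tendsto_inverse_0_at_top filterlim_ident)
  then have L: "((\<lambda>t::real. real n * (ln t / t) - M + M * inverse t) \<longlongrightarrow> - M) at_top" by simp
  have "eventually (\<lambda>t::real. (real n * ln t - (t - 1) * M) / t = real n * (ln t / t) - M + M * inverse t) at_top"
    using eventually_gt_at_top[of 0] by eventually_elim (simp add: field_simps)
  then show ?thesis using L by (simp only: tendsto_cong)
qed

lemma ldp_log_lt_top: "ldp_log t p < \<infinity>"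
  by (simp add: ldp_log_def)
lemma ldp_log_ne_top: "ldp_log t p \<noteq> \<infinity>"
  by (simp add: ldp_log_def)

theorem lemma2p1:
  fixes n :: nat
  assumes "n \<ge> 1"
  shows "LDP (subtopology euclidean (simplex_n n)) (gem_law n) (gem_rate n)"
  unfolding LDP_def
proof (intro conjI allI impI)
  show "rate_function (subtopology euclidean (simplex_n n)) (gem_rate n)" by (rule rate_fn)
next
  fix C assume "closedin (subtopology euclidean (simplex_n n)) C"
  then obtain F where F0: "closedin euclidean F" "C = F \<inter> simplex_n n"
    unfolding closedin_subtopology by blast
  have Fc: "closed F" using F0(1) by (simp only: closed_closedin)
  have Cb: "C \<in> sets borel" unfolding F0(2) by (intro borel_closed closed_Int Fc closed_simplex)
  have CS: "C \<subseteq> simplex_n n" unfolding F0(2) by blast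
  let ?L = "INF x\<in>C. gem_rate n x"
  show "Limsup at_top (\<lambda>\<theta>. ldp_log \<theta> (measure (gem_law n \<theta>) C)) \<le> - ?L"
  proof (rule Limsup_le_iff[THEN iffD2], intro allI impI)
    fix y :: ereal assume y: "- ?L < y"
    show "eventually (\<lambda>\<theta>. ldp_log \<theta> (measure (gem_law n \<theta>) C) < y) at_top"
    proof (cases y)
      case PInf then show ?thesis by (intro always_eventually allI) (simp add: ldp_log_ne_top)
    next
      case MInf then show ?thesis using y by simp
    next
      case (real y')
      obtain M where M: "ereal M \<le> ?L" "- M < y'"
      proof (cases ?L)
        case (real l) then show ?thesis using that[of l] y \<open>y = ereal y'\<close> by auto
      next
        case PInf then show ?thesis using that[of "1 - y'"] by auto
      next
        case MInf then show ?thesis using y by simp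
      qed
      define q where "q = exp (- M)"
      have q: "0 < q" unfolding q_def by simp
      have Cq: "1 - (\<Sum>k<n. x k) \<le> q" if x: "x \<in> C" for x
      proof (cases "(\<Sum>k<n. x k) < 1")
        case True
        have "ereal M \<le> gem_rate n x" using M(1) INF_lower[OF x, of "gem_rate n"] by (rule order.trans)
        then have "M \<le> ln (1 / (1 - (\<Sum>k<n. x k)))" using True CS x by (auto simp: gem_rate_def)
        then have "M \<le> - ln (1 - (\<Sum>k<n. x k))" using True by (simp add: ln_div)
        then have "ln (1 - (\<Sum>k<n. x k)) \<le> - M" by linarith
        then have "exp (ln (1 - (\<Sum>k<n. x k))) \<le> exp (- M)" by simp
        then show ?thesis unfolding q_def using True by simp
      next
        case False then show ?thesis using q by simp
      qed
      have ev1: "eventually (\<lambda>\<theta>. (real n * ln \<theta> - (\<theta> - 1) * M) / \<theta> < y') at_top"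
        using lim_aux[of n M] M(2) by (rule order_tendstoD(2))
      show ?thesis
        using ev1 eventually_gt_at_top[of 1]
      proof eventually_elim
        case (elim \<theta>)
        let ?P = "measure (gem_law n \<theta>) C"
        have Pb: "?P \<le> \<theta> ^ n * q powr (\<theta> - 1)"
          using upper_meas[OF elim(2) q Cb Cq] by simp
        show ?case
        proof (cases "?P = 0")
          case True then show ?thesis by (simp add: ldp_log_def \<open>y = ereal y'\<close>)
        next
          case False
          then have P0: "0 < ?P" using measure_nonneg[of "gem_law n \<theta>" C] by linarith
          have pos: "0 < \<theta> ^ n * q powr (\<theta> - 1)" using elim(2) q by simp
          have "ln ?P \<le> ln (\<theta> ^ n * q powr (\<theta> - 1))" using P0 Pb pos by (subst ln_le_cancel_iff) auto
          also have "\<dots> = ln (\<theta> ^ n) + ln (q powr (\<theta> - 1))"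
            using elim(2) q by (subst ln_mult) simp
          also have "\<dots> = real n * ln \<theta> - (\<theta> - 1) * M"
            unfolding ln_realpow ln_powr q_def ln_exp by simp
          finally have "ln ?P / \<theta> \<le> (real n * ln \<theta> - (\<theta> - 1) * M) / \<theta>"
            using elim(2) by (intro divide_right_mono) auto
          then have "ln ?P / \<theta> < y'" using elim(1) by linarith
          then show ?thesis using False by (simp add: ldp_log_def \<open>y = ereal y'\<close>)
        qed
      qed
    qed
  qed
next
  fix G assume "openin (subtopology euclidean (simplex_n n)) G"
  then obtain T where T0: "openin euclidean T" "G = T \<inter> simplex_n n"
    unfolding openin_subtopology by blast
  have T: "open T" using T0(1) by (simp only: open_openin)
  have GS: "G = simplex_n n \<inter> T" unfolding T0(2) by blast
  show "- (INF x\<in>G. gem_rate n x) \<le> Liminf at_top (\<lambda>\<theta>. ldp_log \<theta> (measure (gem_law n \<theta>) G))"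
  proof (rule le_Liminf_iff[THEN iffD2], intro allI impI)
    fix y :: ereal assume y: "y < - (INF x\<in>G. gem_rate n x)"
    then have "(INF x\<in>G. gem_rate n x) < - y" using ereal_less_uminus_reorder by blast
    then obtain x where x: "x \<in> G" "gem_rate n x < - y" by (auto simp: INF_less_iff)
    have xS: "x \<in> simplex_n n" and xT: "x \<in> T" using x(1) GS by auto
    let ?s = "\<Sum>k<n. x k"
    have s1: "?s < 1" using x(2) by (cases "?s < 1") (auto simp: gem_rate_def)
    have "ereal (ln (1 / (1 - ?s))) < - y" using x(2) s1 xS by (simp add: gem_rate_def)
    then have "y < - ereal (ln (1 / (1 - ?s)))" using ereal_less_uminus_reorder by blast
    moreover have "- ereal (ln (1 / (1 - ?s))) = ereal (ln (1 - ?s))" using s1 by (simp add: ln_div)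
    ultimately have ys: "y < ereal (ln (1 - ?s))" by simp
    obtain y0 where y0: "y \<le> ereal y0" "y0 < ln (1 - ?s)"
    proof (cases y)
      case (real r) then show ?thesis using that[of r] ys by auto
    next
      case MInf then show ?thesis using that[of "ln (1 - ?s) - 1"] by auto
    next
      case PInf then show ?thesis using ys by simp
    qed
    define c where "c = exp ((y0 + ln (1 - ?s)) / 2)"
    have c0: "0 < c" unfolding c_def by simp
    have cs: "c < 1 - ?s"
    proof -
      have "(y0 + ln (1 - ?s)) / 2 < ln (1 - ?s)" using y0 by simp
      then have "exp ((y0 + ln (1 - ?s)) / 2) < exp (ln (1 - ?s))" by simp
      then show ?thesis unfolding c_def using s1 by simp
    qed
    have lnc: "y0 < ln c" unfolding c_def using y0 by simp
    show "eventually (\<lambda>\<theta>. y < ldp_log \<theta> (measure (gem_law n \<theta>) G)) at_top"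
      using lower_meas[OF assms T xT xS s1 c0 cs] eventually_gt_at_top[of 0]
    proof eventually_elim
      case (elim \<theta>)
      let ?P = "measure (gem_law n \<theta>) G"
      have Pc: "c powr \<theta> \<le> ?P" using elim(1) GS by simp
      have P0: "0 < ?P" using Pc powr_gt_zero[of c \<theta>] c0 by linarith
      have "ln (c powr \<theta>) \<le> ln ?P" using Pc c0 P0 by (subst ln_le_cancel_iff) auto
      then have "\<theta> * ln c \<le> ln ?P" by (simp only: ln_powr)
      then have "ln c \<le> ln ?P / \<theta>" using elim(2) by (simp add: field_simps)
      then have "y0 < ln ?P / \<theta>" using lnc by linarith
      then have "ereal y0 < ldp_log \<theta> ?P" using P0 by (simp add: ldp_log_def)
      then show ?case using y0(1) by (rule order.strict_trans1[rotated])
    qed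
  qed
qed

end
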